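(* Let $D^*$ be an absolutely continuous real random variable with cumulative distribution function $F(q)=\Pr\{D^*\le q\}$ and probability density function $f(q)=dF(q)/dq$, and assume $F$ is strictly increasing and continuous. Let $c>0$, $P>0$ and $q_0\ge 0$, and consider the one-round problem $$\min_{q_1}\; c(q_1-q_0)+P\bigl(1-F(q_1)\bigr)\qquad\text{subject to } q_0\le q_1 .$$ If there exist $\tilde q> q_0$ and $\hat\epsilon\ge 0$ such that $$\frac{c}{P}\le \frac{F(\tilde q)-F(q_0)}{\tilde q-q_0},\qquad \hat\epsilon\le 1-F(q_0),\qquad P=\frac{c}{f\bigl(F^{-1}(1-\hat\epsilon)\bigr)},$$ then there exists an $\epsilon\le 1-F(q_0)$ satisfying $P=c/f\bigl(F^{-1}(1-\epsilon)\bigr)$, and an optimal solution of the problem above is $q_1^*:=F^{-1}(1-\epsilon)$. Otherwise, an optimal solution is $q_1^*:=q_0$.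
   Context: $D^*$ models the (unknown) minimum amount of training data needed to reach a target performance; $c$ is the per-sample collection cost, $P$ the penalty for failing to reach the target, and $q_0$ the initial data set size. $F^{-1}$ denotes the quantile function $F^{-1}(p)=\inf\{q : F(q)\ge p\}$. *)

theory Defs
  imports "HOL-Probability.Probability"
begin

definition quantile :: "(real \<Rightarrow> real) \<Rightarrow> real \<Rightarrow> real" where
  "quantile F p = Inf {q. F q \<ge> p}"

definition one_round_cost :: "real \<Rightarrow> real \<Rightarrow> real \<Rightarrow> (real \<Rightarrow> real) \<Rightarrow> real \<Rightarrow> real" where
  "one_round_cost c P q0 F q1 = c * (q1 - q0) + P * (1 - F q1)"

definition one_round_optimal :: "real \<Rightarrow> real \<Rightarrow> real \<Rightarrow> (real \<Rightarrow> real) \<Rightarrow> real \<Rightarrow> bool" where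
  "one_round_optimal c P q0 F q1 \<longleftrightarrow>
     q0 \<le> q1 \<and> (\<forall>q. q0 \<le> q \<longrightarrow> one_round_cost c P q0 F q1 \<le> one_round_cost c P q0 F q)"

end

theory Submission
  imports Defs
begin

lemma key:
  fixes F f :: "real \<Rightarrow> real" and c P q0 qt :: real
  assumes F1: "\<And>q. F q \<le> 1"
    and der: "\<And>q. (F has_real_derivative f q) (at q)"
    and sm: "strict_mono F"
    and cont: "continuous_on UNIV F"
    and "c > 0" and "P > 0"
    and qt: "qt > q0" "one_round_cost c P q0 F qt \<le> one_round_cost c P q0 F q0"
  shows "\<exists>q'. q' > q0 \<and> f q' = c / P \<and> one_round_optimal c P q0 F q'"
proof -
  define g where "g = one_round_cost c P q0 F"
  have g: "g q = c * (q - q0) + P * (1 - F q)" for q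
    unfolding g_def one_round_cost_def by simp
  define R where "R = q0 + g q0 / c + 1"
  have g0: "g q0 \<ge> 0" using F1[of q0] \<open>P > 0\<close> by (simp add: g)
  have big: "g q > g q0" if "q > R" for q
  proof -
    have "c * (q - q0) > c * (g q0 / c)"
      using that \<open>c > 0\<close> unfolding R_def by (intro mult_strict_left_mono) auto
    then have "c * (q - q0) > g q0" using \<open>c > 0\<close> by simp
    moreover have "P * (1 - F q) \<ge> 0" using F1[of q] \<open>P > 0\<close> by simp
    ultimately show ?thesis by (simp add: g)
  qed
  have qR: "q0 \<le> R" using g0 \<open>c > 0\<close> unfolding R_def by simp
  have cg: "continuous_on {q0..R} g"
    unfolding g by (intro continuous_intros continuous_on_subset[OF cont]) auto
  obtain qs where qs: "qs \<in> {q0..R}" "\<And>y. y \<in> {q0..R} \<Longrightarrow> g qs \<le> g y"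
    using continuous_attains_inf[OF compact_Icc _ cg] qR by auto
  have glob: "g qs \<le> g y" if "y \<ge> q0" for y
  proof (cases "y \<le> R")
    case True then show ?thesis using qs that by auto
  next
    case False
    then have "g y > g q0" using big by simp
    moreover have "g qs \<le> g q0" using qs qR by auto
    ultimately show ?thesis by simp
  qed
  define q' where "q' = (if qs > q0 then qs else qt)"
  have q'gt: "q' > q0" using qt unfolding q'_def by auto
  have glob': "g q' \<le> g y" if "y \<ge> q0" for y
  proof (cases "qs > q0")
    case True then show ?thesis using glob that unfolding q'_def by simp
  next
    case False
    then have "qs = q0" using qs by auto
    then show ?thesis using glob[OF that] qt unfolding q'_def g_def using False by simp
  qed
  have dg: "(g has_real_derivative (c - P * f q')) (at q')"
    unfolding g by (auto intro!: derivative_eq_intros der)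
  have "c - P * f q' = 0"
  proof (rule DERIV_local_min[OF dg, of "q' - q0"])
    show "0 < q' - q0" using q'gt by simp
    show "\<forall>y. \<bar>q' - y\<bar> < q' - q0 \<longrightarrow> g q' \<le> g y"
      using glob' by auto
  qed
  then have "f q' = c / P" using \<open>P > 0\<close> by (simp add: field_simps)
  moreover have "one_round_optimal c P q0 F q'"
    using glob' q'gt unfolding one_round_optimal_def g_def by auto
  ultimately show ?thesis using q'gt by blast
qed

lemma quantile_F:
  assumes "strict_mono (F :: real \<Rightarrow> real)"
  shows "quantile F (F q) = q"
proof -
  have "{x. F q \<le> F x} = {q..}"
    using assms by (auto simp: strict_mono_less_eq)
  then show ?thesis unfolding quantile_def by simp
qed

theorem theorem1:
  fixes M :: "'a measure" and D :: "'a \<Rightarrow> real"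
    and F f :: "real \<Rightarrow> real" and c P q0 :: real
  assumes "prob_space M"
    and "distributed M lborel D (\<lambda>q. ennreal (f q))"
    and "F = cdf (distr M borel D)"
    and "\<And>q. (F has_real_derivative f q) (at q)"
    and "strict_mono F"
    and "continuous_on UNIV F"
    and "c > 0" and "P > 0" and "q0 \<ge> 0"
  shows "((\<exists>qt \<epsilon>h. qt > q0 \<and> \<epsilon>h \<ge> 0 \<and> c / P \<le> (F qt - F q0) / (qt - q0)
              \<and> \<epsilon>h \<le> 1 - F q0 \<and> P = c / f (quantile F (1 - \<epsilon>h)))
           \<longrightarrow> (\<exists>\<epsilon>. \<epsilon> \<le> 1 - F q0 \<and> P = c / f (quantile F (1 - \<epsilon>))
                  \<and> one_round_optimal c P q0 F (quantile F (1 - \<epsilon>))))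
       \<and> ((\<not> (\<exists>qt \<epsilon>h. qt > q0 \<and> \<epsilon>h \<ge> 0 \<and> c / P \<le> (F qt - F q0) / (qt - q0)
              \<and> \<epsilon>h \<le> 1 - F q0 \<and> P = c / f (quantile F (1 - \<epsilon>h))))
           \<longrightarrow> one_round_optimal c P q0 F q0)"
proof -
  have meas: "D \<in> measurable M borel"
    using distributed_measurable[OF assms(2)] by simp
  interpret real_distribution "distr M borel D"
    using prob_space.real_distribution_distr[OF assms(1) meas] .
  have F1: "\<And>q. F q \<le> 1" using cdf_bounded_prob assms(3) by simp
  have slope: "c / P \<le> (F qt - F q0) / (qt - q0) \<longleftrightarrow>
      one_round_cost c P q0 F qt \<le> one_round_cost c P q0 F q0" if "qt > q0" for qt
  proof -
    have "c / P \<le> (F qt - F q0) / (qt - q0) \<longleftrightarrow> c * (qt - q0) \<le> P * (F qt - F q0)"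
      using that \<open>P > 0\<close> by (simp add: divide_simps mult.commute)
    also have "\<dots> \<longleftrightarrow> one_round_cost c P q0 F qt \<le> one_round_cost c P q0 F q0"
      unfolding one_round_cost_def by (simp add: algebra_simps)
    finally show ?thesis .
  qed
  have main: "\<exists>\<epsilon>. 0 \<le> \<epsilon> \<and> \<epsilon> \<le> 1 - F q0 \<and> P = c / f (quantile F (1 - \<epsilon>))
                  \<and> one_round_optimal c P q0 F (quantile F (1 - \<epsilon>))"
    if qth: "qt > q0" "c / P \<le> (F qt - F q0) / (qt - q0)" for qt
  proof -
    obtain q' where q': "q' > q0" "f q' = c / P" "one_round_optimal c P q0 F q'"
      using key[OF F1 assms(4,5,6,7,8) qth(1)] slope qth by blast
    have "F q0 \<le> F q'" using q'(1) assms(5) by (simp add: strict_mono_less_eq)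
    moreover have "quantile F (1 - (1 - F q')) = q'" using quantile_F[OF assms(5)] by simp
    ultimately show ?thesis using q' F1[of q'] \<open>c > 0\<close> \<open>P > 0\<close>
      by (intro exI[of _ "1 - F q'"]) auto
  qed
  show ?thesis
  proof (intro conjI impI)
    assume "\<exists>qt \<epsilon>h. qt > q0 \<and> \<epsilon>h \<ge> 0 \<and> c / P \<le> (F qt - F q0) / (qt - q0)
              \<and> \<epsilon>h \<le> 1 - F q0 \<and> P = c / f (quantile F (1 - \<epsilon>h))"
    then show "\<exists>\<epsilon>. \<epsilon> \<le> 1 - F q0 \<and> P = c / f (quantile F (1 - \<epsilon>))
                  \<and> one_round_optimal c P q0 F (quantile F (1 - \<epsilon>))"
      using main by blast
  next
    assume H: "\<not> (\<exists>qt \<epsilon>h. qt > q0 \<and> \<epsilon>h \<ge> 0 \<and> c / P \<le> (F qt - F q0) / (qt - q0)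
              \<and> \<epsilon>h \<le> 1 - F q0 \<and> P = c / f (quantile F (1 - \<epsilon>h)))"
    have "one_round_cost c P q0 F q0 \<le> one_round_cost c P q0 F q" if "q0 \<le> q" for q
    proof (cases "q = q0")
      case False
      then have "q > q0" using that by simp
      show ?thesis
      proof (rule ccontr)
        assume "\<not> ?thesis"
        then have "c / P \<le> (F q - F q0) / (q - q0)" using slope[OF \<open>q > q0\<close>] by simp
        then show False using main[OF \<open>q > q0\<close>] H \<open>q > q0\<close> by blast
      qed
    qed simp
    then show "one_round_optimal c P q0 F q0" unfolding one_round_optimal_def by simp
  qed
qed

end
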